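(* Let $n\ge 0$ and $r\ge 1$ be integers and let $x$ be a complex number with $xF_r(x)\neq 0$. Then \[ 2\sum_{j=0}^{n}F_{r-1}(x)^jF_{r+1}(x)^{n-j}=\sum_{j=0}^{n}\left(\frac{L_r(x)}{2}\right)^j\left(F_{r+1}(x)^{n-j}+F_{r-1}(x)^{n-j}\right)=2\,\frac{F_{r+1}(x)^{n+1}-F_{r-1}(x)^{n+1}}{xF_r(x)}. \]
   Context: The Fibonacci polynomials $F_n(x)$ and Lucas polynomials $L_n(x)$ are defined by $F_0(x)=0$, $F_1(x)=1$, $L_0(x)=2$, $L_1(x)=x$ and $G_{n+1}(x)=xG_n(x)+G_{n-1}(x)$. *)

theory Defs
  imports Complex_Main
begin

fun fibp :: "complex \<Rightarrow> nat \<Rightarrow> complex" where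
  "fibp x 0 = 0"
| "fibp x (Suc 0) = 1"
| "fibp x (Suc (Suc n)) = x * fibp x (Suc n) + fibp x n"

fun lucp :: "complex \<Rightarrow> nat \<Rightarrow> complex" where
  "lucp x 0 = 2"
| "lucp x (Suc 0) = x"
| "lucp x (Suc (Suc n)) = x * lucp x (Suc n) + lucp x n"

end

theory Submission
  imports Defs
begin

lemma G_rec1:
  fixes a b :: complex
  shows "(\<Sum>j=0..Suc n. b ^ j * a ^ (Suc n - j)) = a * (\<Sum>j=0..n. b ^ j * a ^ (n - j)) + b ^ Suc n"
proof -
  have "(\<Sum>j=0..Suc n. b ^ j * a ^ (Suc n - j)) = (\<Sum>j=0..n. b ^ j * a ^ (Suc n - j)) + b ^ Suc n"
    by (simp add: sum.atLeast0_atMost_Suc)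
  also have "(\<Sum>j=0..n. b ^ j * a ^ (Suc n - j)) = (\<Sum>j=0..n. a * (b ^ j * a ^ (n - j)))"
    by (rule sum.cong) (auto simp: Suc_diff_le)
  finally show ?thesis by (simp add: sum_distrib_left)
qed

lemma G_rec2:
  fixes a b :: complex
  shows "(\<Sum>j=0..Suc n. b ^ j * a ^ (Suc n - j)) = b * (\<Sum>j=0..n. b ^ j * a ^ (n - j)) + a ^ Suc n"
proof -
  have "(\<Sum>j=0..Suc n. b ^ j * a ^ (Suc n - j)) = a ^ Suc n + (\<Sum>j=0..n. b ^ Suc j * a ^ (Suc n - Suc j))"
    by (subst sum.atLeast0_atMost_Suc_shift) simp
  also have "(\<Sum>j=0..n. b ^ Suc j * a ^ (Suc n - Suc j)) = (\<Sum>j=0..n. b * (b ^ j * a ^ (n - j)))"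
    by (rule sum.cong) auto
  finally show ?thesis by (simp add: sum_distrib_left)
qed

lemma S_rec:
  fixes a b c :: complex
  shows "(\<Sum>j=0..Suc n. c ^ j * (a ^ (Suc n - j) + b ^ (Suc n - j)))
       = c * (\<Sum>j=0..n. c ^ j * (a ^ (n - j) + b ^ (n - j))) + (a ^ Suc n + b ^ Suc n)"
proof -
  have "(\<Sum>j=0..Suc n. c ^ j * (a ^ (Suc n - j) + b ^ (Suc n - j)))
     = (a ^ Suc n + b ^ Suc n) + (\<Sum>j=0..n. c ^ Suc j * (a ^ (Suc n - Suc j) + b ^ (Suc n - Suc j)))"
    by (subst sum.atLeast0_atMost_Suc_shift) simp
  also have "(\<Sum>j=0..n. c ^ Suc j * (a ^ (Suc n - Suc j) + b ^ (Suc n - Suc j)))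
     = (\<Sum>j=0..n. c * (c ^ j * (a ^ (n - j) + b ^ (n - j))))"
    by (rule sum.cong) auto
  finally show ?thesis by (simp add: sum_distrib_left)
qed

lemma main_id:
  fixes a b :: complex
  shows "2 * (\<Sum>j=0..n. b ^ j * a ^ (n - j)) = (\<Sum>j=0..n. ((a + b) / 2) ^ j * (a ^ (n - j) + b ^ (n - j)))"
proof (induction n)
  case 0 then show ?case by simp
next
  case (Suc n)
  have "2 * (\<Sum>j=0..Suc n. b ^ j * a ^ (Suc n - j))
      = (a + b) * (\<Sum>j=0..n. b ^ j * a ^ (n - j)) + (a ^ Suc n + b ^ Suc n)"
    using G_rec1[where a=a and b=b and n=n] G_rec2[where a=a and b=b and n=n] by (simp add: algebra_simps)
  also have "\<dots> = ((a+b)/2) * (2 * (\<Sum>j=0..n. b ^ j * a ^ (n - j))) + (a ^ Suc n + b ^ Suc n)"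
    by simp
  also have "\<dots> = (\<Sum>j=0..Suc n. ((a + b) / 2) ^ j * (a ^ (Suc n - j) + b ^ (Suc n - j)))"
    using Suc.IH S_rec[where c="(a+b)/2" and a=a and b=b and n=n] by simp
  finally show ?case .
qed

lemma G_closed:
  fixes a b :: complex
  shows "(a - b) * (\<Sum>j=0..n. b ^ j * a ^ (n - j)) = a ^ Suc n - b ^ Suc n"
proof (cases n)
  case 0 then show ?thesis by simp
next
  case (Suc m)
  have alg: "(a-b)*G1 = a*A - b*B" if h1: "G1 = a*G + B" and h2: "G1 = b*G + A" for G1 G A B :: complex
  proof -
    have e1: "a*G1 = a*(b*G+A)" using h2 by simp
    have e2: "b*G1 = b*(a*G+B)" using h1 by simp
    have "(a-b)*G1 = a*G1 - b*G1" by (simp add: algebra_simps)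
    also have "\<dots> = a*(b*G+A) - b*(a*G+B)" by (simp only: e1 e2)
    also have "\<dots> = a*A - b*B" by (simp add: algebra_simps)
    finally show ?thesis .
  qed
  have "(a-b) * (\<Sum>j=0..Suc m. b ^ j * a ^ (Suc m - j)) = a * a ^ Suc m - b * b ^ Suc m"
    by (rule alg[OF G_rec1[where a=a and b=b and n=m] G_rec2[where a=a and b=b and n=m]])
  then show ?thesis unfolding Suc by simp
qed

lemma luc_fib: "lucp x (Suc r) = fibp x (Suc (Suc r)) + fibp x r"
proof (induction r rule: less_induct)
  case (less r)
  show ?case
  proof (cases r)
    case 0 then show ?thesis by simp
  next
    case (Suc m)
    show ?thesis
    proof (cases m)
      case 0 then show ?thesis using Suc by simp
    next
      case (Suc k)
      have i1: "lucp x (Suc m) = fibp x (Suc (Suc m)) + fibp x m" using less \<open>r = Suc m\<close> by simp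
      have i2: "lucp x (Suc k) = fibp x (Suc (Suc k)) + fibp x k" using less \<open>r = Suc m\<close> Suc by simp
      have "lucp x (Suc r) = x * lucp x (Suc m) + lucp x (Suc k)" using \<open>r = Suc m\<close> Suc by simp
      also have "\<dots> = x * (fibp x (Suc (Suc m)) + fibp x m) + (fibp x (Suc (Suc k)) + fibp x k)"
        by (simp only: i1 i2)
      also have "\<dots> = fibp x (Suc (Suc r)) + fibp x r"
        using \<open>r = Suc m\<close> Suc by (simp add: algebra_simps)
      finally show ?thesis .
    qed
  qed
qed

theorem theorem11:
  fixes n r :: nat and x :: complex
  assumes "r \<ge> 1" and "x * fibp x r \<noteq> 0"
  shows "2 * (\<Sum>j=0..n. fibp x (r - 1) ^ j * fibp x (r + 1) ^ (n - j))
           = (\<Sum>j=0..n. (lucp x r / 2) ^ j * (fibp x (r + 1) ^ (n - j) + fibp x (r - 1) ^ (n - j)))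
       \<and> (\<Sum>j=0..n. (lucp x r / 2) ^ j * (fibp x (r + 1) ^ (n - j) + fibp x (r - 1) ^ (n - j)))
           = 2 * (fibp x (r + 1) ^ (n + 1) - fibp x (r - 1) ^ (n + 1)) / (x * fibp x r)"
proof -
  obtain s where r: "r = Suc s" using assms(1) by (cases r) auto
  define a where "a = fibp x (r + 1)"
  define b where "b = fibp x (r - 1)"
  have L: "lucp x r = a + b" unfolding a_def b_def r using luc_fib[of x s] by simp
  have D: "a - b = x * fibp x r" unfolding a_def b_def r by simp
  have E1: "2 * (\<Sum>j=0..n. b ^ j * a ^ (n - j)) = (\<Sum>j=0..n. ((a + b) / 2) ^ j * (a ^ (n - j) + b ^ (n - j)))"
    by (rule main_id)
  have E2: "2 * (\<Sum>j=0..n. b ^ j * a ^ (n - j)) = 2 * (a ^ (n+1) - b ^ (n+1)) / (x * fibp x r)"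
  proof -
    have nz: "x * fibp x r \<noteq> 0" by fact
    have "(x * fibp x r) * (\<Sum>j=0..n. b ^ j * a ^ (n - j)) = a ^ (n+1) - b ^ (n+1)"
      using G_closed[where a=a and b=b and n=n] D by simp
    then have "(\<Sum>j=0..n. b ^ j * a ^ (n - j)) = (a ^ (n+1) - b ^ (n+1)) / (x * fibp x r)"
      using nz by (simp add: eq_divide_eq mult.commute)
    then show ?thesis by simp
  qed
  show ?thesis using E1 E2 L unfolding a_def b_def by simp
qed

end
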